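(* Let $A$ be a commutative noetherian local ring, let $x,y\in A$ be an exact pair of zero divisors, and let $a\in A$. (a) If $a$ is a unit, then $G_a\cong H_a\cong A$. (b) If $a$ is not a unit, then neither $G_a$ nor $H_a$ is a free $A$-module.
   Context: Two non-units $x,y\in A$ form an exact pair of zero divisors if $\operatorname{Ann}_A(x)=(y)$ and $\operatorname{Ann}_A(y)=(x)$. For $a\in A$, let $\gamma_a=\begin{pmatrix} x & a\\ 0 & y\end{pmatrix}$ and $\eta_a=\begin{pmatrix} y & -a\\ 0 & x\end{pmatrix}$, viewed as $A$-linear maps $A^2\to A^2$ acting on column vectors, and set $G_a=\operatorname{Coker}\gamma_a$, $H_a=\operatorname{Coker}\eta_a$. *)

theory Defs
  imports Main
begin

definition ring_ideal :: "'a::comm_ring_1 set \<Rightarrow> bool" where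
  "ring_ideal I \<longleftrightarrow> 0 \<in> I \<and> (\<forall>a\<in>I. \<forall>b\<in>I. a + b \<in> I) \<and> (\<forall>a\<in>I. \<forall>r. r * a \<in> I)"

definition maximal_ideal :: "'a::comm_ring_1 set \<Rightarrow> bool" where
  "maximal_ideal m \<longleftrightarrow> ring_ideal m \<and> m \<noteq> UNIV \<and>
     (\<forall>J. ring_ideal J \<and> m \<subseteq> J \<longrightarrow> J = m \<or> J = UNIV)"

definition gen_ideal :: "'a::comm_ring_1 set \<Rightarrow> 'a set" where
  "gen_ideal F = {\<Sum>f\<in>F. r f * f | r. True}"

definition noetherian_ring :: "'a::comm_ring_1 itself \<Rightarrow> bool" where
  "noetherian_ring _ \<longleftrightarrow> (\<forall>I::'a set. ring_ideal I \<longrightarrow> (\<exists>F. finite F \<and> F \<subseteq> I \<and> I = gen_ideal F))"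

definition local_ring :: "'a::comm_ring_1 itself \<Rightarrow> bool" where
  "local_ring _ \<longleftrightarrow> (\<exists>!m::'a set. maximal_ideal m)"

definition is_unit :: "'a::comm_ring_1 \<Rightarrow> bool" where
  "is_unit u \<longleftrightarrow> u dvd 1"

definition ann :: "'a::comm_ring_1 \<Rightarrow> 'a set" where
  "ann x = {z. x * z = 0}"

definition principal :: "'a::comm_ring_1 \<Rightarrow> 'a set" where
  "principal y = {y * r | r. True}"

definition exact_pair :: "'a::comm_ring_1 \<Rightarrow> 'a \<Rightarrow> bool" where
  "exact_pair x y \<longleftrightarrow> \<not> is_unit x \<and> \<not> is_unit y \<and>
     ann x = principal y \<and> ann y = principal x"

(* A^2 is represented as 'a \<times> 'a (column vectors (u,v)).
   gamma_a = [[x, a], [0, y]], eta_a = [[y, -a], [0, x]] acting on columns. *)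
definition gamma_map :: "'a::comm_ring_1 \<Rightarrow> 'a \<Rightarrow> 'a \<Rightarrow> 'a \<times> 'a \<Rightarrow> 'a \<times> 'a" where
  "gamma_map x y a = (\<lambda>(u, v). (x * u + a * v, y * v))"

definition eta_map :: "'a::comm_ring_1 \<Rightarrow> 'a \<Rightarrow> 'a \<Rightarrow> 'a \<times> 'a \<Rightarrow> 'a \<times> 'a" where
  "eta_map x y a = (\<lambda>(u, v). (y * u - a * v, x * v))"

(* The cokernel of a map \<phi> : A^2 \<rightarrow> A^2 is the quotient module A^2 / M with M = range \<phi>.
   "A^2/M \<cong> A": there is an A-linear surjection A^2 \<rightarrow> A with kernel exactly M
   (first isomorphism theorem). *)
definition quot_iso_ring :: "('a::comm_ring_1 \<times> 'a) set \<Rightarrow> bool" where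
  "quot_iso_ring M \<longleftrightarrow> (\<exists>f :: 'a \<times> 'a \<Rightarrow> 'a.
      (\<forall>u1 v1 u2 v2. f (u1 + u2, v1 + v2) = f (u1, v1) + f (u2, v2)) \<and>
      (\<forall>r u v. f (r * u, r * v) = r * f (u, v)) \<and>
      surj f \<and> {p. f p = 0} = M)"

(* A^2/M is a free A-module: there is a family B of elements of A^2 whose classes
   form a basis of A^2/M (linearly independent modulo M, and spanning modulo M). *)
definition lin_comb :: "('a \<times> 'a \<Rightarrow> 'a::comm_ring_1) \<Rightarrow> ('a \<times> 'a) set \<Rightarrow> 'a \<times> 'a" where
  "lin_comb c S = ((\<Sum>b\<in>S. c b * fst b), (\<Sum>b\<in>S. c b * snd b))"

definition quot_free :: "('a::comm_ring_1 \<times> 'a) set \<Rightarrow> bool" where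
  "quot_free M \<longleftrightarrow> (\<exists>B :: ('a \<times> 'a) set.
      (\<forall>S c. finite S \<and> S \<subseteq> B \<and> lin_comb c S \<in> M \<longrightarrow> (\<forall>b\<in>S. c b = 0)) \<and>
      (\<forall>u v. \<exists>S c. finite S \<and> S \<subseteq> B \<and>
          (u - fst (lin_comb c S), v - snd (lin_comb c S)) \<in> M))"

definition G_mod :: "'a::comm_ring_1 \<Rightarrow> 'a \<Rightarrow> 'a \<Rightarrow> ('a \<times> 'a) set" where
  "G_mod x y a = range (gamma_map x y a)"

definition H_mod :: "'a::comm_ring_1 \<Rightarrow> 'a \<Rightarrow> 'a \<Rightarrow> ('a \<times> 'a) set" where
  "H_mod x y a = range (eta_map x y a)"

end

theory Submission
  imports Defs
begin

lemma ideal_union_chain: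
  fixes I :: "'a::comm_ring_1 set"
  assumes C: "C \<in> chains {J. ring_ideal J \<and> I \<subseteq> J \<and> (1::'a) \<notin> J}" and ne: "C \<noteq> {}"
  shows "\<Union>C \<in> {J. ring_ideal J \<and> I \<subseteq> J \<and> (1::'a) \<notin> J}"
proof -
  have sub: "C \<subseteq> {J. ring_ideal J \<and> I \<subseteq> J \<and> (1::'a) \<notin> J}" and ch: "\<forall>A\<in>C. \<forall>B\<in>C. A \<subseteq> B \<or> B \<subseteq> A"
    using chainsD[OF C] chainsD2[OF C] by blast+
  have "ring_ideal (\<Union>C)"
    unfolding ring_ideal_def
  proof (intro conjI ballI allI)
    obtain J where "J \<in> C" using ne by blast
    then show "0 \<in> \<Union>C" using sub by (auto simp: ring_ideal_def)
  next
    fix p q assume "p \<in> \<Union>C" "q \<in> \<Union>C"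
    then obtain J K where JK: "J \<in> C" "K \<in> C" "p \<in> J" "q \<in> K" by blast
    from ch JK(1,2) have "J \<subseteq> K \<or> K \<subseteq> J" by blast
    then show "p + q \<in> \<Union>C"
    proof
      assume "J \<subseteq> K" then show ?thesis using JK sub unfolding ring_ideal_def by blast
    next
      assume "K \<subseteq> J" then show ?thesis using JK sub unfolding ring_ideal_def by blast
    qed
  next
    fix p r assume "p \<in> \<Union>C"
    then show "r * p \<in> \<Union>C" using sub unfolding ring_ideal_def by blast
  qed
  moreover have "I \<subseteq> \<Union>C" using ne sub by blast
  moreover have "1 \<notin> \<Union>C" using sub by blast
  ultimately show ?thesis by blast
qed

lemma exists_maximal:
  fixes I :: "'a::comm_ring_1 set"
  assumes "ring_ideal I" "1 \<notin> I"
  shows "\<exists>m. maximal_ideal m \<and> I \<subseteq> m"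
proof -
  let ?A = "{J. ring_ideal J \<and> I \<subseteq> J \<and> (1::'a) \<notin> J}"
  have "\<forall>C\<in>chains ?A. \<exists>U\<in>?A. \<forall>X\<in>C. X \<subseteq> U"
  proof
    fix C assume C: "C \<in> chains ?A"
    show "\<exists>U\<in>?A. \<forall>X\<in>C. X \<subseteq> U"
    proof (cases "C = {}")
      case True then show ?thesis using assms by auto
    next
      case False then show ?thesis using ideal_union_chain[OF C False] by blast
    qed
  qed
  from Zorn_Lemma2[OF this] obtain M where M: "M \<in> ?A" "\<forall>X\<in>?A. M \<subseteq> X \<longrightarrow> X = M" by blast
  have "maximal_ideal M"
    unfolding maximal_ideal_def
  proof (intro conjI allI impI)
    show "ring_ideal M" using M by blast
    show "M \<noteq> UNIV" using M by blast
  next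
    fix J assume J: "ring_ideal J \<and> M \<subseteq> J"
    show "J = M \<or> J = UNIV"
    proof (cases "1 \<in> J")
      case True
      have "J = UNIV"
      proof
        show "UNIV \<subseteq> J"
        proof
          fix r :: 'a have "r * 1 \<in> J" using J True unfolding ring_ideal_def by blast
          then show "r \<in> J" by simp
        qed
      qed simp
      then show ?thesis by blast
    next
      case False
      then have "J \<in> ?A" using J M by blast
      then show ?thesis using M J by blast
    qed
  qed
  then show ?thesis using M by blast
qed

lemma nonunit_in_m:
  fixes z :: "'a::comm_ring_1"
  assumes "local_ring TYPE('a)" "maximal_ideal m" "\<not> is_unit z"
  shows "z \<in> m"
proof -
  have "ring_ideal (principal z)"
    unfolding ring_ideal_def principal_def
    by (auto, metis mult_zero_right, metis distrib_left, metis mult.left_commute)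
  moreover have "1 \<notin> principal z" using assms(3)
    by (auto simp: principal_def is_unit_def dvd_def)
  ultimately obtain m' where "maximal_ideal m'" "principal z \<subseteq> m'" using exists_maximal by blast
  moreover have "m' = m" using assms(1,2) \<open>maximal_ideal m'\<close> unfolding local_ring_def by blast
  moreover have "z \<in> principal z" unfolding principal_def by (auto intro: exI[of _ 1])
  ultimately show ?thesis by blast
qed

lemma local_m:
  assumes "local_ring TYPE('a::comm_ring_1)"
  obtains m :: "'a::comm_ring_1 set" where "maximal_ideal m"
  using assms unfolding local_ring_def by blast

lemma max_ideal: "maximal_ideal m \<Longrightarrow> ring_ideal m" "maximal_ideal m \<Longrightarrow> m \<noteq> UNIV"
  unfolding maximal_ideal_def by simp_all

lemma m_one: "maximal_ideal m \<Longrightarrow> (1::'a::comm_ring_1) \<notin> m"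
proof
  assume h: "maximal_ideal m" "1 \<in> m"
  have "\<And>r. r * 1 \<in> m" using max_ideal(1)[OF h(1)] h(2) unfolding ring_ideal_def by blast
  then have "m = UNIV" by auto
  then show False using max_ideal(2)[OF h(1)] by blast
qed

lemma m_comb: "maximal_ideal m \<Longrightarrow> p \<in> m \<Longrightarrow> q \<in> m \<Longrightarrow> s \<in> m \<Longrightarrow>
   (p::'a::comm_ring_1) * r1 + q * r2 + s * r3 \<in> m"
proof -
  assume m: "maximal_ideal m" "p \<in> m" "q \<in> m" "s \<in> m"
  have I: "ring_ideal m" using max_ideal(1)[OF m(1)] .
  have cl: "\<And>z r. z \<in> m \<Longrightarrow> z * r \<in> m"
  proof -
    fix z r assume "z \<in> m"
    then have "r * z \<in> m" using I unfolding ring_ideal_def by blast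
    then show "z * r \<in> m" by (simp add: mult.commute)
  qed
  have ad: "\<And>z w. z \<in> m \<Longrightarrow> w \<in> m \<Longrightarrow> z + w \<in> m" using I unfolding ring_ideal_def
    by blast
  show ?thesis by (intro ad cl m(2-4))
qed

lemma lin_comb_scale: fixes z :: "'a::comm_ring_1" shows "lin_comb (\<lambda>b. z * c b) S = (z * fst (lin_comb c S), z * snd (lin_comb c S))"
  by (simp add: lin_comb_def sum_distrib_left mult.assoc)

lemma sum_factor:
  assumes "\<forall>b\<in>S. c b = (y::'a::comm_ring_1) * d b"
  shows "(\<Sum>b\<in>S. c b * fst b) = y * (\<Sum>b\<in>S. d b * fst b)"
  using assms by (simp add: sum_distrib_left mult.assoc)

lemma indep_factor:
  fixes z w :: "'a::comm_ring_1"
  assumes ind: "\<forall>S c. finite S \<and> S \<subseteq> B \<and> lin_comb c S \<in> M \<longrightarrow> (\<forall>b\<in>S. c b = 0)"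
    and S: "finite S" "S \<subseteq> B"
    and mem: "(z * fst (lin_comb c S), z * snd (lin_comb c S)) \<in> M"
    and an: "ann z = principal w"
  shows "\<exists>W. fst (lin_comb c S) = w * W"
proof -
  have "lin_comb (\<lambda>b. z * c b) S \<in> M" using mem by (simp only: lin_comb_scale)
  then have "\<forall>b\<in>S. z * c b = 0" using ind S by blast
  then have "\<forall>b\<in>S. c b \<in> principal w" using an unfolding ann_def by blast
  then have "\<forall>b\<in>S. \<exists>r. c b = w * r" unfolding principal_def by blast
  then have "\<forall>b\<in>S. c b = w * (SOME r. c b = w * r)" by (metis (mono_tags, lifting) someI)
  then have "(\<Sum>b\<in>S. c b * fst b) = w * (\<Sum>b\<in>S. (SOME r. c b = w * r) * fst b)"
    by (rule sum_factor)
  then show ?thesis unfolding lin_comb_def by auto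
qed

theorem corollary3p9:
  fixes x y a :: "'a::comm_ring_1"
  assumes "noetherian_ring TYPE('a)"
    and "local_ring TYPE('a)"
    and "exact_pair x y"
  shows "(is_unit a \<longrightarrow> quot_iso_ring (G_mod x y a) \<and> quot_iso_ring (H_mod x y a)) \<and>
         (\<not> is_unit a \<longrightarrow> \<not> quot_free (G_mod x y a) \<and> \<not> quot_free (H_mod x y a))"
proof (intro conjI impI)
  assume "is_unit a"
  then obtain ai where ai: "a * ai = 1" unfolding is_unit_def dvd_def by (metis mult.commute)
  show "quot_iso_ring (G_mod x y a)"
    unfolding quot_iso_ring_def
  proof (intro exI[of _ "\<lambda>(p,q). y * p - a * q"] conjI allI)
    show "surj (\<lambda>(p,q). y * p - a * q)"
    proof -
      have "r = (\<lambda>(p,q). y * p - a * q) (0, - ai * r)" for r using ai by (simp add: mult.assoc[symmetric])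
      then show ?thesis unfolding surj_def by blast
    qed
    show "{p. (case p of (p,q) \<Rightarrow> y * p - a * q) = 0} = G_mod x y a"
    proof -
    have A: "(p, q) \<in> G_mod x y a" if h: "y * p - a * q = 0" for p q
    proof -
      have yp: "y * p = a * q" using h by simp
      have "q = ai * (a * q)" using ai by (simp add: mult.assoc[symmetric] mult.commute)
      also have "\<dots> = y * (ai * p)" using yp by (simp add: algebra_simps)
      finally have q: "q = y * (ai * p)" .
      have p: "p = a * (ai * p)" using ai by (simp add: mult.assoc[symmetric])
      have "(p, q) = gamma_map x y a (0, ai * p)"
        unfolding gamma_map_def using p q by simp
      then show "(p, q) \<in> G_mod x y a" unfolding G_mod_def by blast
    qed
    have B: "y * (x * u + a * v) - a * (y * v) = 0" for u v
    proof -
      have "y \<in> principal y" unfolding principal_def by (auto intro: exI[of _ 1])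
      then have "y \<in> ann x" using assms(3) unfolding exact_pair_def by blast
      then have xy: "x * y = 0" unfolding ann_def by simp
      have "y * (x * u) = (x * y) * u" "x * (y * u) = (x * y) * u" by (simp_all add: ac_simps)
      with xy have yx: "y * (x * u) = 0" "x * (y * u) = 0" by simp_all
      show ?thesis using yx by (simp add: algebra_simps)
    qed
    show ?thesis
    proof (rule set_eqI)
      fix z :: "'a \<times> 'a"
      obtain p q where z: "z = (p, q)" by (cases z)
      show "z \<in> {p. (case p of (p,q) \<Rightarrow> y * p - a * q) = 0} \<longleftrightarrow> z \<in> G_mod x y a"
      proof
        assume "z \<in> {p. (case p of (p,q) \<Rightarrow> y * p - a * q) = 0}"
        then have "y * p - a * q = 0" using z by simp
        then show "z \<in> G_mod x y a" using A z by simp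
      next
        assume "z \<in> G_mod x y a"
        then obtain u v where "z = gamma_map x y a (u, v)" unfolding G_mod_def by auto
        then show "z \<in> {p. (case p of (p,q) \<Rightarrow> y * p - a * q) = 0}" using B[of u v] by (simp add: gamma_map_def)
      qed
    qed
    qed
  qed (auto simp: algebra_simps)
  show "quot_iso_ring (H_mod x y a)"
    unfolding quot_iso_ring_def
  proof (intro exI[of _ "\<lambda>(p,q). x * p + a * q"] conjI allI)
    show "surj (\<lambda>(p,q). x * p + a * q)"
    proof -
      have "r = (\<lambda>(p,q). x * p + a * q) (0, ai * r)" for r using ai by (simp add: mult.assoc[symmetric])
      then show ?thesis unfolding surj_def by blast
    qed
    show "{p. (case p of (p,q) \<Rightarrow> x * p + a * q) = 0} = H_mod x y a"
    proof -
    have A: "(p, q) \<in> H_mod x y a" if h: "x * p + a * q = 0" for p q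
    proof -
      have xp: "x * p = - (a * q)" using h by (simp add: eq_neg_iff_add_eq_0)
      have "q = ai * (a * q)" using ai by (simp add: mult.assoc[symmetric] mult.commute)
      also have "\<dots> = x * (- ai * p)" using xp by (simp add: algebra_simps)
      finally have q: "q = x * (- ai * p)" .
      have p: "p = - (a * (- ai * p))" using ai by (simp add: mult.assoc[symmetric])
      have "(p, q) = eta_map x y a (0, - ai * p)"
        unfolding eta_map_def using p q by simp
      then show "(p, q) \<in> H_mod x y a" unfolding H_mod_def by blast
    qed
    have B: "x * (y * u - a * v) + a * (x * v) = 0" for u v
    proof -
      have "y \<in> principal y" unfolding principal_def by (auto intro: exI[of _ 1])
      then have "y \<in> ann x" using assms(3) unfolding exact_pair_def by blast
      then have xy: "x * y = 0" unfolding ann_def by simp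
      have "y * (x * u) = (x * y) * u" "x * (y * u) = (x * y) * u" by (simp_all add: ac_simps)
      with xy have yx: "y * (x * u) = 0" "x * (y * u) = 0" by simp_all
      show ?thesis using yx by (simp add: algebra_simps)
    qed
    show ?thesis
    proof (rule set_eqI)
      fix z :: "'a \<times> 'a"
      obtain p q where z: "z = (p, q)" by (cases z)
      show "z \<in> {p. (case p of (p,q) \<Rightarrow> x * p + a * q) = 0} \<longleftrightarrow> z \<in> H_mod x y a"
      proof
        assume "z \<in> {p. (case p of (p,q) \<Rightarrow> x * p + a * q) = 0}"
        then have "x * p + a * q = 0" using z by simp
        then show "z \<in> H_mod x y a" using A z by simp
      next
        assume "z \<in> H_mod x y a"
        then obtain u v where "z = eta_map x y a (u, v)" unfolding H_mod_def by auto
        then show "z \<in> {p. (case p of (p,q) \<Rightarrow> x * p + a * q) = 0}" using B[of u v] by (simp add: eta_map_def)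
      qed
    qed
    qed
  qed (auto simp: algebra_simps)
next
  assume na: "\<not> is_unit a"
  obtain m :: "'a set" where m: "maximal_ideal m" using local_m[OF assms(2)] by blast
  have xm: "x \<in> m" and ym: "y \<in> m" and am: "a \<in> m"
    using nonunit_in_m[OF assms(2) m] na assms(3) unfolding exact_pair_def by auto
  have annx: "ann x = principal y" and anny: "ann y = principal x"
    using assms(3) unfolding exact_pair_def by auto
  show "\<not> quot_free (G_mod x y a)"
  proof
    assume "quot_free (G_mod x y a)"
    then obtain B where ind: "\<forall>S c. finite S \<and> S \<subseteq> B \<and> lin_comb c S \<in> G_mod x y a \<longrightarrow> (\<forall>b\<in>S. c b = 0)"
      and sp: "\<forall>u v. \<exists>S c. finite S \<and> S \<subseteq> B \<and>
          (u - fst (lin_comb c S), v - snd (lin_comb c S)) \<in> G_mod x y a"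
      unfolding quot_free_def by (elim exE conjE) (rule that)
    from sp[rule_format, of 1 0] obtain S c where S: "finite S" "S \<subseteq> B" and
      mem: "(1 - fst (lin_comb c S), 0 - snd (lin_comb c S)) \<in> G_mod x y a"
      by (elim exE conjE) (rule that)
    define L1 where "L1 = fst (lin_comb c S)"
    define L2 where "L2 = snd (lin_comb c S)"
    from mem obtain zz where zz: "(1 - L1, 0 - L2) = gamma_map x y a zz"
      unfolding G_mod_def by (elim rangeE) (rule that, simp add: L1_def L2_def)
    obtain u v where "zz = (u, v)" by (cases zz)
    with zz have e1: "1 - L1 = x * u + a * v" and e2: "0 - L2 = y * v"
      unfolding gamma_map_def by simp_all
    have "(x * L1, x * L2) = gamma_map x y a (1 - x * u, - x * v)"
    proof -
      have l1: "L1 = 1 - x * u - a * v" using e1 by (simp add: algebra_simps)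
      have l2: "L2 = - (y * v)" using arg_cong[OF e2, of uminus] by simp
      show ?thesis unfolding gamma_map_def l1 l2 by (simp add: algebra_simps)
    qed
    then have "(x * L1, x * L2) \<in> G_mod x y a" unfolding G_mod_def by blast
    then obtain W where W: "L1 = y * W"
      using indep_factor[OF ind S _ annx] unfolding L1_def L2_def by blast
    have "1 = y * W + x * u + a * v" using e1 W by (simp add: algebra_simps)
    moreover have "y * W + x * u + a * v \<in> m" by (rule m_comb[OF m ym xm am])
    ultimately have "1 \<in> m" by simp
    then show False using m_one[OF m] by blast
  qed
  show "\<not> quot_free (H_mod x y a)"
  proof
    assume "quot_free (H_mod x y a)"
    then obtain B where ind: "\<forall>S c. finite S \<and> S \<subseteq> B \<and> lin_comb c S \<in> H_mod x y a \<longrightarrow> (\<forall>b\<in>S. c b = 0)"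
      and sp: "\<forall>u v. \<exists>S c. finite S \<and> S \<subseteq> B \<and>
          (u - fst (lin_comb c S), v - snd (lin_comb c S)) \<in> H_mod x y a"
      unfolding quot_free_def by (elim exE conjE) (rule that)
    from sp[rule_format, of 1 0] obtain S c where S: "finite S" "S \<subseteq> B" and
      mem: "(1 - fst (lin_comb c S), 0 - snd (lin_comb c S)) \<in> H_mod x y a"
      by (elim exE conjE) (rule that)
    define L1 where "L1 = fst (lin_comb c S)"
    define L2 where "L2 = snd (lin_comb c S)"
    from mem obtain zz where zz: "(1 - L1, 0 - L2) = eta_map x y a zz"
      unfolding H_mod_def by (elim rangeE) (rule that, simp add: L1_def L2_def)
    obtain u v where "zz = (u, v)" by (cases zz)
    with zz have e1: "1 - L1 = y * u - a * v" and e2: "0 - L2 = x * v"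
      unfolding eta_map_def by simp_all
    have "(y * L1, y * L2) = eta_map x y a (1 - y * u, - y * v)"
    proof -
      have l1: "L1 = 1 - y * u + a * v" using e1 by (simp add: algebra_simps)
      have l2: "L2 = - (x * v)" using arg_cong[OF e2, of uminus] by simp
      show ?thesis unfolding eta_map_def l1 l2 by (simp add: algebra_simps)
    qed
    then have "(y * L1, y * L2) \<in> H_mod x y a" unfolding H_mod_def by blast
    then obtain W where W: "L1 = x * W"
      using indep_factor[OF ind S _ anny] unfolding L1_def L2_def by blast
    have "1 = x * W + y * u + a * (- v)" using e1 W by (simp add: algebra_simps)
    moreover have "x * W + y * u + a * (- v) \<in> m" by (rule m_comb[OF m xm ym am])
    ultimately have "1 \<in> m" by simp
    then show False using m_one[OF m] by blast
  qed
qed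

end
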